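(* Let $d\geq 1$, let $p_1<p_2<\dots<p_d$ be the first $d$ prime numbers, let $N\geq 1$ be an integer, and let $C>1$ and $\sigma\in\mathbb{R}$. Let $\mathbf{A}_1$ be the $(d+1)\times(d+1)$ real matrix $$\mathbf{A}_1=\begin{bmatrix}\ln p_1 & & & 0\\ & \ddots & & \vdots\\ & & \ln p_d & 0\\ C\ln p_1 & \cdots & C\ln p_d & C\ln N\end{bmatrix}$$ (diagonal entries $\ln p_1,\dots,\ln p_d$ in the first $d$ rows, zeros elsewhere in those rows, last row $(C\ln p_1,\dots,C\ln p_d,C\ln N)$). Let $\mathbf{z}=(z_1,\dots,z_{d+1})\in\mathbb{Z}^{d+1}$ with $z_{d+1}<0$, and put $\gamma=|z_{d+1}|$, $$u=\prod_{1\le i\le d,\ z_i>0}p_i^{z_i},\qquad k=\prod_{1\le i\le d,\ z_i<0}p_i^{-z_i}.$$ If $$\|\mathbf{A}_1\mathbf{z}\|_1\leq 2\ln C+2\sigma\ln p_d-\gamma\ln N,$$ then $|u-kN^{\gamma}|\leq p_d^{\sigma}$.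
   Context: $\ln$ denotes the natural logarithm and $\|\cdot\|_1$ the $\ell^1$ norm on $\mathbb{R}^{d+1}$. Empty products equal $1$. *)

theory Defs
  imports "HOL-Analysis.Analysis" "HOL-Computational_Algebra.Primes" "HOL-Library.Infinite_Set"
begin

text \<open>The n-th prime, 1-based: nth_prime 1 = 2, nth_prime 2 = 3, ...\<close>
definition nth_prime :: "nat \<Rightarrow> nat" where
  "nth_prime i = enumerate {q::nat. prime q} (i - 1)"

definition A1 :: "nat \<Rightarrow> real \<Rightarrow> nat \<Rightarrow> nat \<Rightarrow> nat \<Rightarrow> real" where
  "A1 d C N i j =
     (if i \<le> d then (if j = i then ln (real (nth_prime i)) else 0)
      else if j \<le> d then C * ln (real (nth_prime j)) else C * ln (real N))"

definition mat_vec :: "nat \<Rightarrow> (nat \<Rightarrow> nat \<Rightarrow> real) \<Rightarrow> (nat \<Rightarrow> real) \<Rightarrow> nat \<Rightarrow> real" where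
  "mat_vec n M v i = (\<Sum>j=1..n. M i j * v j)"

definition l1norm :: "nat \<Rightarrow> (nat \<Rightarrow> real) \<Rightarrow> real" where
  "l1norm n v = (\<Sum>i=1..n. \<bar>v i\<bar>)"

end

theory Submission
  imports Defs
begin

lemma key:
  fixes C w :: real assumes C: "C > 1" and w0: "0 < w" and w1: "w < 1"
  shows "ln C + (C-1)/2 * ln w + ln (1-w) \<le> 0"
proof -
  define b where "b = (C-1)/2"
  have b: "b > 0" using C b_def by simp
  define X where "X = w*(b+1)/b"
  define Y where "Y = (1-w)*(b+1)"
  have X0: "X > 0" using w0 b X_def by simp
  have Y0: "Y > 0" using w1 b Y_def by simp
  have lX: "ln X \<le> X - 1" using X0 ln_le_minus_one by blast
  have lY: "ln Y \<le> Y - 1" using Y0 ln_le_minus_one by blast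
  have eX: "ln X = ln w + ln (b+1) - ln b" using X_def w0 b by (simp add: ln_mult ln_div)
  have eY: "ln Y = ln (1-w) + ln (b+1)" using Y_def w1 b by (simp add: ln_mult)
  have s1: "b * ln X \<le> b * (X - 1)" using lX b by (simp add: mult_left_mono)
  have XY: "b*(X-1) + (Y-1) = 0" using b by (simp add: X_def Y_def field_simps)
  have l2: "ln (b/(b+1)) \<le> b/(b+1) - 1" using b ln_le_minus_one by (simp)
  have l2': "ln b - ln (b+1) \<le> -1/(b+1)" using l2 b by (simp add: ln_div field_simps)
  have l3: "b*(ln b - ln (b+1)) \<le> b*(-1/(b+1))" using mult_left_mono[OF l2', of b] b by simp
  have l4: "ln ((2*b+1)/(b+1)) \<le> (2*b+1)/(b+1) - 1" using b ln_le_minus_one by simp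
  have l4': "ln (2*b+1) - ln (b+1) \<le> b/(b+1)" using l4 b by (simp add: ln_div field_simps)
  have l5: "b*(-1/(b+1)) + b/(b+1) = 0" using b by (simp add: field_simps)
  have "ln C + (C-1)/2 * ln w + ln (1-w) = ln (2*b+1) + b * ln w + ln (1-w)"
  proof -
    have e1: "2*b+1 = C" by (simp add: b_def field_simps)
    have e2: "(C-1)/2 = b" by (simp add: b_def)
    show ?thesis by (simp only: e1 e2)
  qed
  also have "\<dots> = b * ln X + ln Y + b*(ln b - ln (b+1)) - ln (b+1) + ln (2*b+1)"
  proof -
    have "b * ln X = b * ln w + b * ln (b+1) - b * ln b" using arg_cong[OF eX, of "\<lambda>t. b * t"] by (simp add: right_diff_distrib distrib_left)
    thus ?thesis using eY by (simp add: algebra_simps)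
  qed
  also have "\<dots> \<le> 0" using s1 lY XY l3 l4' l5 by linarith
  finally show ?thesis .
qed

lemma main_le:
  fixes U V C S :: real
  assumes U: "U > 0" and V: "V > 0" and VU: "V \<le> U" and C: "C > 1"
    and h: "ln U + ln V + C * \<bar>ln U - ln V\<bar> \<le> 2 * ln C + 2 * S"
  shows "\<bar>U - V\<bar> \<le> exp S"
proof (cases "V = U")
  case True thus ?thesis by simp
next
  case False
  define w where "w = V/U"
  have w0: "w > 0" using U V w_def by simp
  have w1: "w < 1" using False VU U w_def by simp
  have lV: "ln V = ln U + ln w" using U V w_def by (simp add: ln_div)
  have lw: "ln w < 0" using w0 w1 by simp
  have ab: "\<bar>ln U - ln V\<bar> = - ln w" using lV lw by simp
  have h2: "2 * ln U \<le> 2 * ln C + 2 * S + (C - 1) * ln w"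
    using h lV ab by (simp add: algebra_simps)
  have k: "ln C + (C-1)/2 * ln w + ln (1-w) \<le> 0" using key C w0 w1 by blast
  have "ln (U * (1-w)) \<le> S" using h2 k U w1 by (simp add: ln_mult)
  moreover have "U * (1-w) = U - V" using U w_def by (simp add: field_simps)
  ultimately have "ln (U - V) \<le> S" by simp
  moreover have "U - V > 0" using VU False by simp
  ultimately have "U - V \<le> exp S" by (metis exp_ln exp_le_cancel_iff)
  thus ?thesis using VU by simp
qed

lemma main_abs:
  fixes U V C S :: real
  assumes U: "U > 0" and V: "V > 0" and C: "C > 1"
    and h: "ln U + ln V + C * \<bar>ln U - ln V\<bar> \<le> 2 * ln C + 2 * S"
  shows "\<bar>U - V\<bar> \<le> exp S"
proof (cases "V \<le> U")
  case True thus ?thesis using main_le U V C h by blast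
next
  case False
  have h': "ln V + ln U + C * \<bar>ln V - ln U\<bar> \<le> 2 * ln C + 2 * S"
    using h by (simp only: abs_minus_commute[of "ln V"] add.commute[of "ln V"])
  have "\<bar>V - U\<bar> \<le> exp S" using main_le[OF V U _ C h'] False by linarith
  thus ?thesis by (simp only: abs_minus_commute[of V])
qed

lemma nth_prime_prime: "prime (nth_prime i)"
  unfolding nth_prime_def using enumerate_in_set[OF primes_infinite] by blast

lemma ln_prod_pow:
  fixes A :: "nat set" and e :: "nat \<Rightarrow> int"
  assumes "finite A" and "\<And>i. i \<in> A \<Longrightarrow> e i \<ge> 0"
  shows "ln (real (\<Prod>i\<in>A. nth_prime i ^ nat (e i))) = (\<Sum>i\<in>A. real_of_int (e i) * ln (real (nth_prime i)))"
proof -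
  have pos: "\<And>i. real (nth_prime i) > 0" using nth_prime_prime prime_gt_0_nat by simp
  have "ln (real (\<Prod>i\<in>A. nth_prime i ^ nat (e i))) = ln (\<Prod>i\<in>A. real (nth_prime i) ^ nat (e i))"
    by simp
  also have "\<dots> = (\<Sum>i\<in>A. ln (real (nth_prime i) ^ nat (e i)))"
    using pos assms(1) by (simp add: ln_prod)
  also have "\<dots> = (\<Sum>i\<in>A. real_of_int (e i) * ln (real (nth_prime i)))"
    using pos assms(2) by (intro sum.cong) (simp_all add: ln_realpow)
  finally show ?thesis .
qed

lemma core:
  fixes d N :: nat and C \<sigma> :: real and z :: "nat \<Rightarrow> int"
    and P Q :: "nat set" and g u k :: nat and V :: real
  assumes "d \<ge> 1" and "N \<ge> 1" and "C > 1"
    and "z (d+1) < 0"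
    and "l1norm (d+1) (mat_vec (d+1) (A1 d C N) (\<lambda>i. real_of_int (z i)))
           \<le> 2 * ln C + 2 * \<sigma> * ln (real (nth_prime d))
             - real (nat \<bar>z (d+1)\<bar>) * ln (real N)"
    and P_def: "P = {i\<in>{1..d}. z i > 0}"
    and Q_def: "Q = {i\<in>{1..d}. z i < 0}"
    and g_def: "g = nat \<bar>z (d+1)\<bar>"
    and u_def: "u = (\<Prod>i\<in>P. nth_prime i ^ nat (z i))"
    and k_def: "k = (\<Prod>i\<in>Q. nth_prime i ^ nat (- z i))"
    and V_def: "V = real k * real N ^ g"
  shows "\<bar>real u - V\<bar> \<le> real (nth_prime d) powr \<sigma>"
proof -
  define lp where "lp i = ln (real (nth_prime i))" for i
  have pos: "\<And>i. real (nth_prime i) > 0" using nth_prime_prime prime_gt_0_nat by simp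
  have u0: "real u > 0" unfolding u_def using pos by (simp add: prod_pos)
  have k0: "real k > 0" unfolding k_def using pos by (simp add: prod_pos)
  have lu: "ln (real u) = (\<Sum>i\<in>P. real_of_int (z i) * lp i)"
    unfolding u_def lp_def by (rule ln_prod_pow) (auto simp: P_def)
  have lk: "ln (real k) = (\<Sum>i\<in>Q. real_of_int (- z i) * lp i)"
    unfolding k_def lp_def by (rule ln_prod_pow) (auto simp: Q_def)
  have V0: "V > 0" using k0 assms(2) V_def by simp
  have lV: "ln V = ln (real k) + real g * ln (real N)"
    using k0 assms(2) by (simp add: V_def ln_mult ln_realpow)
  have zg: "real_of_int (z (d+1)) = - real g" using assms(4) g_def by simp
  have sP: "(\<Sum>i\<in>P. real_of_int (z i) * lp i) = (\<Sum>i\<in>{1..d}. if z i > 0 then real_of_int (z i) * lp i else 0)"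
    unfolding P_def by (rule sum.inter_filter) simp
  have sQ: "(\<Sum>i\<in>Q. real_of_int (- z i) * lp i) = (\<Sum>i\<in>{1..d}. if z i < 0 then real_of_int (- z i) * lp i else 0)"
    unfolding Q_def by (rule sum.inter_filter) simp
  have lpp: "\<And>i. lp i > 0"
  proof -
    fix i have "nth_prime i > 1" using nth_prime_prime prime_gt_1_nat by blast
    thus "lp i > 0" unfolding lp_def by simp
  qed
  have sabs: "(\<Sum>i=1..d. \<bar>lp i * real_of_int (z i)\<bar>) = ln (real u) + ln (real k)"
  proof -
    have "(\<Sum>i=1..d. \<bar>lp i * real_of_int (z i)\<bar>) = (\<Sum>i=1..d. (if z i > 0 then real_of_int (z i) * lp i else 0) + (if z i < 0 then real_of_int (- z i) * lp i else 0))"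
    proof (intro sum.cong refl)
      fix i show "\<bar>lp i * real_of_int (z i)\<bar> = (if z i > 0 then real_of_int (z i) * lp i else 0) + (if z i < 0 then real_of_int (- z i) * lp i else 0)"
        using lpp[of i] by (auto simp: abs_mult)
    qed
    thus ?thesis using lu lk sP sQ by (simp add: sum.distrib)
  qed
  have ssum: "(\<Sum>i=1..d. lp i * real_of_int (z i)) = ln (real u) - ln (real k)"
  proof -
    have "(\<Sum>i=1..d. lp i * real_of_int (z i)) = (\<Sum>i=1..d. (if z i > 0 then real_of_int (z i) * lp i else 0) - (if z i < 0 then real_of_int (- z i) * lp i else 0))"
      by (intro sum.cong refl) auto
    thus ?thesis using lu lk sP sQ by (simp add: sum_subtractf)
  qed
  have row: "\<And>i. 1 \<le> i \<Longrightarrow> i \<le> d \<Longrightarrow> mat_vec (d+1) (A1 d C N) (\<lambda>i. real_of_int (z i)) i = lp i * real_of_int (z i)"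
  proof -
    fix i assume i: "1 \<le> i" "i \<le> d"
    have "mat_vec (d+1) (A1 d C N) (\<lambda>i. real_of_int (z i)) i = (\<Sum>j\<in>{1..d+1}. if j = i then lp i * real_of_int (z i) else 0)"
      unfolding mat_vec_def A1_def lp_def using i by (intro sum.cong refl) auto
    also have "\<dots> = lp i * real_of_int (z i)" using i by (simp add: sum.delta)
    finally show "mat_vec (d+1) (A1 d C N) (\<lambda>i. real_of_int (z i)) i = lp i * real_of_int (z i)" .
  qed
  have rowl: "mat_vec (d+1) (A1 d C N) (\<lambda>i. real_of_int (z i)) (d+1) = C * (ln (real u) - ln V)"
  proof -
    have "mat_vec (d+1) (A1 d C N) (\<lambda>i. real_of_int (z i)) (d+1) = (\<Sum>j=1..d. C * lp j * real_of_int (z j)) + C * ln (real N) * real_of_int (z (d+1))"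
      unfolding mat_vec_def A1_def lp_def by (simp add: sum.cl_ivl_Suc)
    also have "\<dots> = C * ((\<Sum>j=1..d. lp j * real_of_int (z j)) + ln (real N) * real_of_int (z (d+1)))"
      by (simp add: sum_distrib_left algebra_simps)
    also have "\<dots> = C * (ln (real u) - ln V)"
    proof -
      have "(\<Sum>j=1..d. lp j * real_of_int (z j)) + ln (real N) * real_of_int (z (d+1)) = ln (real u) - ln V"
        using ssum lV zg by (simp add: algebra_simps)
      thus ?thesis by simp
    qed
    finally show ?thesis .
  qed
  have norm: "l1norm (d+1) (mat_vec (d+1) (A1 d C N) (\<lambda>i. real_of_int (z i))) = ln (real u) + ln (real k) + C * \<bar>ln (real u) - ln V\<bar>"
  proof -
    have S: "\<And>f::nat\<Rightarrow>real. (\<Sum>i=1..d+1. f i) = (\<Sum>i=1..d. f i) + f (d+1)"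
      by (simp add: sum.cl_ivl_Suc)
    have e1: "l1norm (d+1) (mat_vec (d+1) (A1 d C N) (\<lambda>i. real_of_int (z i))) = (\<Sum>i=1..d. \<bar>mat_vec (d+1) (A1 d C N) (\<lambda>i. real_of_int (z i)) i\<bar>) + \<bar>C * (ln (real u) - ln V)\<bar>"
      by (simp only: l1norm_def S rowl)
    have e2: "(\<Sum>i=1..d. \<bar>mat_vec (d+1) (A1 d C N) (\<lambda>i. real_of_int (z i)) i\<bar>) = (\<Sum>i=1..d. \<bar>lp i * real_of_int (z i)\<bar>)"
      using row by (intro sum.cong refl) auto
    have e3: "\<bar>C * (ln (real u) - ln V)\<bar> = C * \<bar>ln (real u) - ln V\<bar>" using assms(3) by (simp add: abs_mult)
    show ?thesis unfolding e1 e2 e3 sabs ..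
  qed
  have h: "ln (real u) + ln V + C * \<bar>ln (real u) - ln V\<bar> \<le> 2 * ln C + 2 * (\<sigma> * lp d)"
  proof -
    have a5: "ln (real u) + ln (real k) + C * \<bar>ln (real u) - ln V\<bar> \<le> 2 * ln C + 2 * \<sigma> * lp d - real g * ln (real N)"
      using assms(5) unfolding norm g_def lp_def .
    have "2 * \<sigma> * lp d = 2 * (\<sigma> * lp d)" by simp
    thus ?thesis using a5 lV by linarith
  qed
  have "\<bar>real u - V\<bar> \<le> exp (\<sigma> * lp d)" using main_abs[OF u0 V0 assms(3) h] .
  moreover have "exp (\<sigma> * lp d) = real (nth_prime d) powr \<sigma>"
    using pos[of d] by (simp add: powr_def lp_def)
  ultimately show ?thesis by simp
qed


theorem theorem1:
  fixes d N :: nat and C \<sigma> :: real and z :: "nat \<Rightarrow> int"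
  assumes "d \<ge> 1" and "N \<ge> 1" and "C > 1"
    and "z (d+1) < 0"
    and "l1norm (d+1) (mat_vec (d+1) (A1 d C N) (\<lambda>i. real_of_int (z i)))
           \<le> 2 * ln C + 2 * \<sigma> * ln (real (nth_prime d))
             - real (nat \<bar>z (d+1)\<bar>) * ln (real N)"
  shows "\<bar>real (\<Prod>i\<in>{i\<in>{1..d}. z i > 0}. nth_prime i ^ nat (z i))
          - real (\<Prod>i\<in>{i\<in>{1..d}. z i < 0}. nth_prime i ^ nat (- z i)) * real N ^ nat \<bar>z (d+1)\<bar>\<bar>
         \<le> real (nth_prime d) powr \<sigma>"
  by (rule core[OF assms refl refl refl refl refl refl])

end
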